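(* Let $V$ be a finite nonempty set and $f:\{0,1\}^V\to\{0,1\}^V$ a Boolean network. If no subnetwork of $f$ (including $f$ itself) is even-self-dual or odd-self-dual, then the conjugate $\tilde f$ of $f$ is a bijection.
   Context: For $x,y\in\{0,1\}^V$, $x\oplus y$ is componentwise addition mod 2, $1$ denotes the all-ones point, and $\|x\|$ is the number of components of $x$ equal to $1$; $x$ is even (odd) if $\|x\|$ is even (odd). The conjugate of $f$ is $\tilde f(x)=f(x)\oplus x$. For a nonempty $I\subseteq V$ and $z\in\{0,1\}^{V\setminus I}$, the subnetwork of $f$ induced by $z$ is the network $h:\{0,1\}^I\to\{0,1\}^I$ defined by $h(x|_I)=f(x)|_I$ for all $x\in\{0,1\}^V$ whose restriction to $V\setminus I$ equals $z$ (for $I=V$ this gives $f$ itself, so $f$ is a subnetwork of itself). A network $g$ on a set $W$ is self-dual if $g(x\oplus 1)=g(x)\oplus 1$ for all $x$; it is even if $\tilde g(\{0,1\}^W)$ is exactly the set of even points of $\{0,1\}^W$, and odd if $\tilde g(\{0,1\}^W)$ is exactly the set of odd points. It is even-self-dual (odd-self-dual) if it is both even (odd) and self-dual. *)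

theory Defs
  imports Main
begin

text \<open>Points of {0,1}^W are represented as Boolean functions 'v \<Rightarrow> bool that are
  False outside W (True = 1). A network on W is a function mapping such points to such points.\<close>

definition points :: "'v set \<Rightarrow> ('v \<Rightarrow> bool) set" where
  "points W = {x. \<forall>v. v \<notin> W \<longrightarrow> x v = False}"

definition xorp :: "('v \<Rightarrow> bool) \<Rightarrow> ('v \<Rightarrow> bool) \<Rightarrow> ('v \<Rightarrow> bool)" where
  "xorp x y = (\<lambda>v. x v \<noteq> y v)"

definition ones :: "'v set \<Rightarrow> ('v \<Rightarrow> bool)" where
  "ones W = (\<lambda>v. v \<in> W)"

definition weight :: "'v set \<Rightarrow> ('v \<Rightarrow> bool) \<Rightarrow> nat" where
  "weight W x = card {v \<in> W. x v}"

definition conj_net :: "(('v \<Rightarrow> bool) \<Rightarrow> ('v \<Rightarrow> bool)) \<Rightarrow> ('v \<Rightarrow> bool) \<Rightarrow> ('v \<Rightarrow> bool)" where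
  "conj_net f x = xorp (f x) x"

definition restr :: "'v set \<Rightarrow> ('v \<Rightarrow> bool) \<Rightarrow> ('v \<Rightarrow> bool)" where
  "restr I x = (\<lambda>v. v \<in> I \<and> x v)"

definition glue :: "'v set \<Rightarrow> ('v \<Rightarrow> bool) \<Rightarrow> ('v \<Rightarrow> bool) \<Rightarrow> ('v \<Rightarrow> bool)" where
  "glue I y z = (\<lambda>v. if v \<in> I then y v else z v)"

text \<open>subnetwork of f induced by z \<in> {0,1}^(V - I): h(x|_I) = f(x)|_I\<close>
definition subnet :: "(('v \<Rightarrow> bool) \<Rightarrow> ('v \<Rightarrow> bool)) \<Rightarrow> 'v set \<Rightarrow> ('v \<Rightarrow> bool)
    \<Rightarrow> ('v \<Rightarrow> bool) \<Rightarrow> ('v \<Rightarrow> bool)" where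
  "subnet f I z = (\<lambda>y. restr I (f (glue I y z)))"

definition self_dual :: "'v set \<Rightarrow> (('v \<Rightarrow> bool) \<Rightarrow> ('v \<Rightarrow> bool)) \<Rightarrow> bool" where
  "self_dual W g \<longleftrightarrow> (\<forall>x \<in> points W. g (xorp x (ones W)) = xorp (g x) (ones W))"

definition even_net :: "'v set \<Rightarrow> (('v \<Rightarrow> bool) \<Rightarrow> ('v \<Rightarrow> bool)) \<Rightarrow> bool" where
  "even_net W g \<longleftrightarrow> conj_net g ` points W = {x \<in> points W. even (weight W x)}"

definition odd_net :: "'v set \<Rightarrow> (('v \<Rightarrow> bool) \<Rightarrow> ('v \<Rightarrow> bool)) \<Rightarrow> bool" where
  "odd_net W g \<longleftrightarrow> conj_net g ` points W = {x \<in> points W. odd (weight W x)}"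

definition even_self_dual :: "'v set \<Rightarrow> (('v \<Rightarrow> bool) \<Rightarrow> ('v \<Rightarrow> bool)) \<Rightarrow> bool" where
  "even_self_dual W g \<longleftrightarrow> even_net W g \<and> self_dual W g"

definition odd_self_dual :: "'v set \<Rightarrow> (('v \<Rightarrow> bool) \<Rightarrow> ('v \<Rightarrow> bool)) \<Rightarrow> bool" where
  "odd_self_dual W g \<longleftrightarrow> odd_net W g \<and> self_dual W g"

end

theory Submission
  imports Defs
begin

lemma points_finite: "finite I \<Longrightarrow> finite (points I)"
proof -
  assume fI: "finite I"
  have "points I \<subseteq> (\<lambda>S v. v \<in> S) ` Pow I"
  proof
    fix x assume "x \<in> points I"
    hence "x = (\<lambda>v. v \<in> {v\<in>I. x v})" by (auto simp: points_def)
    moreover have "{v\<in>I. x v} \<in> Pow I" by auto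
    ultimately show "x \<in> (\<lambda>S v. v \<in> S) ` Pow I" by blast
  qed
  thus ?thesis using fI by (meson finite_Pow_iff finite_imageI finite_subset)
qed

lemma parity: "finite I \<Longrightarrow> card {k\<in>I. v k \<noteq> w k} + 2 * card {k\<in>I. v k \<and> w k}
   = card {k\<in>I. v k} + card {k\<in>I. w k}"
proof -
  assume fI: "finite I"
  have e1: "{k\<in>I. v k} = {k\<in>I. v k \<and> w k} \<union> {k\<in>I. v k \<and> \<not> w k}" by auto
  have e2: "{k\<in>I. w k} = {k\<in>I. v k \<and> w k} \<union> {k\<in>I. \<not> v k \<and> w k}" by auto
  have e3: "{k\<in>I. v k \<noteq> w k} = {k\<in>I. v k \<and> \<not> w k} \<union> {k\<in>I. \<not> v k \<and> w k}" by auto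
  have c1: "card {k\<in>I. v k} = card {k\<in>I. v k \<and> w k} + card {k\<in>I. v k \<and> \<not> w k}"
    unfolding e1 by (rule card_Un_disjoint) (use fI in auto)
  have c2: "card {k\<in>I. w k} = card {k\<in>I. v k \<and> w k} + card {k\<in>I. \<not> v k \<and> w k}"
    unfolding e2 by (rule card_Un_disjoint) (use fI in auto)
  have c3: "card {k\<in>I. v k \<noteq> w k} = card {k\<in>I. v k \<and> \<not> w k} + card {k\<in>I. \<not> v k \<and> w k}"
    unfolding e3 by (rule card_Un_disjoint) (use fI in auto)
  show ?thesis using c1 c2 c3 by simp
qed

lemma par_aux: "(a::nat) + 2*c = b + d \<Longrightarrow> even a = (even b = even d)"
  by presburger

locale slice =
  fixes I :: "'v set" and h :: "('v\<Rightarrow>bool)\<Rightarrow>('v\<Rightarrow>bool)"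
  assumes fin: "finite I"
    and maps: "\<And>x. x \<in> points I \<Longrightarrow> h x \<in> points I"
    and P: "\<And>i x y. i \<in> I \<Longrightarrow> x \<in> points I \<Longrightarrow> y \<in> points I \<Longrightarrow> x i = y i
              \<Longrightarrow> (\<forall>v\<in>I-{i}. h x v = h y v) \<Longrightarrow> x = y"
begin

definition coll where "coll w \<longleftrightarrow> (\<exists>x\<in>points I. h x = w \<and> h (xorp x (ones I)) = w)"

definition dst :: "('v\<Rightarrow>bool) \<Rightarrow> ('v\<Rightarrow>bool) \<Rightarrow> nat" where
  "dst v w = card {k\<in>I. v k \<noteq> w k}"

lemma xor1_points: "x \<in> points I \<Longrightarrow> xorp x (ones I) \<in> points I"
  by (auto simp: points_def xorp_def ones_def)

lemma xor1_twice: "x \<in> points I \<Longrightarrow> xorp (xorp x (ones I)) (ones I) = x"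
  by (rule ext) (auto simp: points_def xorp_def ones_def)

lemma antipodal:
  assumes "x \<in> points I" "y \<in> points I" "h x = h y" "x \<noteq> y"
  shows "y = xorp x (ones I)"
proof (rule ext)
  fix v show "y v = xorp x (ones I) v"
  proof (cases "v \<in> I")
    case True
    have "x v \<noteq> y v"
    proof
      assume "x v = y v"
      then have "x = y" using P[OF True assms(1,2)] assms(3) by auto
      thus False using assms(4) by simp
    qed
    thus ?thesis using True by (auto simp: xorp_def ones_def)
  next
    case False thus ?thesis using assms(1,2) by (auto simp: xorp_def ones_def points_def)
  qed
qed

lemma stepA: assumes "coll w" "i \<in> I" shows "w(i := \<not> w i) \<notin> h ` points I"
proof
  assume "w(i := \<not> w i) \<in> h ` points I"
  then obtain u where u: "u \<in> points I" "h u = w(i := \<not> w i)" by auto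
  obtain x where x: "x \<in> points I" "h x = w" "h (xorp x (ones I)) = w"
    using assms(1) coll_def by auto
  show False
  proof (cases "u i = x i")
    case True
    have "u = x" using P[OF assms(2) u(1) x(1) True] u(2) x(2) by auto
    thus False using u(2) x(2) by (metis fun_upd_same)
  next
    case False
    have ui: "u i = xorp x (ones I) i" using False assms(2) by (auto simp: xorp_def ones_def)
    have "u = xorp x (ones I)"
      using P[OF assms(2) u(1) xor1_points[OF x(1)] ui] u(2) x(3) by auto
    thus False using u(2) x(3) by (metis fun_upd_same)
  qed
qed

lemma phi_surj:
  assumes "i \<in> I" "t \<in> points I"
  shows "\<exists>u\<in>points I. u i = t i \<and> (\<forall>v\<in>I-{i}. h u v = t v)"
proof -
  let ?phi = "\<lambda>x. (h x)(i := x i)"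
  have inj: "inj_on ?phi (points I)"
  proof (rule inj_onI)
    fix x y assume xy: "x \<in> points I" "y \<in> points I" "?phi x = ?phi y"
    have "x i = y i" using fun_cong[OF xy(3), of i] by simp
    moreover have "\<forall>v\<in>I-{i}. h x v = h y v"
    proof
      fix v assume "v \<in> I - {i}"
      thus "h x v = h y v" using fun_cong[OF xy(3), of v] by auto
    qed
    ultimately show "x = y" using P[OF assms(1) xy(1,2)] by blast
  qed
  have sub: "?phi ` points I \<subseteq> points I" using maps assms(1) by (auto simp: points_def split: if_splits)
  have "?phi ` points I = points I" by (rule endo_inj_surj[OF points_finite[OF fin] sub inj])
  then obtain u where u: "u \<in> points I" "?phi u = t" using assms(2) by force
  have "u i = t i" using fun_cong[OF u(2), of i] by simp
  moreover have "\<forall>v\<in>I-{i}. h u v = t v"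
  proof
    fix v assume "v \<in> I - {i}"
    thus "h u v = t v" using fun_cong[OF u(2), of v] by auto
  qed
  ultimately show ?thesis using u(1) by blast
qed

lemma coll_points: "coll w \<Longrightarrow> w \<in> points I"
  using maps coll_def by auto

lemma stepB:
  assumes "coll w" "i \<in> I" "j \<in> I" "i \<noteq> j"
  shows "coll (w(i := \<not> w i, j := \<not> w j))"
proof -
  have wp: "w \<in> points I" using coll_points assms(1) by auto
  let ?t = "w(i := \<not> w i, j := \<not> w j)"
  have tp: "?t \<in> points I" using wp assms by (auto simp: points_def)
  have ex: "\<exists>u\<in>points I. u i = b \<and> h u = ?t" for b
  proof -
    have "?t(i := b) \<in> points I" using tp assms(2) by (auto simp: points_def)
    from phi_surj[OF assms(2) this] obtain u where
      u: "u \<in> points I" "u i = b" "\<forall>v\<in>I-{i}. h u v = ?t v" by auto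
    have hu: "h u \<in> points I" using maps u(1) by auto
    have "h u = ?t"
    proof (rule ccontr)
      assume ne: "h u \<noteq> ?t"
      have "h u i \<noteq> ?t i"
      proof
        assume hi: "h u i = ?t i"
        have "h u v = ?t v" for v
        proof (cases "v \<in> I - {i}")
          case True thus ?thesis using u(3) by blast
        next
          case False
          show ?thesis
          proof (cases "v = i")
            case True thus ?thesis using hi by simp
          next
            case False
            hence "v \<notin> I" using \<open>v \<notin> I - {i}\<close> by auto
            thus ?thesis using hu tp unfolding points_def by blast
          qed
        qed
        thus False using ne by auto
      qed
      have "h u = w(j := \<not> w j)"
      proof (rule ext)
        fix v show "h u v = (w(j := \<not> w j)) v"
        proof (cases "v \<in> I - {i}")
          case True thus ?thesis using u(3) assms(4) by auto
        next
          case False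
          show ?thesis
          proof (cases "v = i")
            case True thus ?thesis using \<open>h u i \<noteq> ?t i\<close> assms(4) by auto
          next
            case False
            hence "v \<notin> I" using \<open>v \<notin> I - {i}\<close> by auto
            thus ?thesis using hu wp assms(3) unfolding points_def by auto
          qed
        qed
      qed
      then have "w(j := \<not> w j) \<in> h ` points I" using u(1) by (metis image_eqI)
      thus False using stepA[OF assms(1) assms(3)] by simp
    qed
    thus ?thesis using u by auto
  qed
  obtain u0 where u0: "u0 \<in> points I" "u0 i = False" "h u0 = ?t" using ex[of False] by auto
  obtain u1 where u1: "u1 \<in> points I" "u1 i = True" "h u1 = ?t" using ex[of True] by auto
  have "u1 = xorp u0 (ones I)" using antipodal[OF u0(1) u1(1)] u0 u1 by auto
  thus "coll ?t" unfolding coll_def using u0 u1 by auto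
qed

lemma distD:
  assumes "coll w"
  shows "v \<in> points I \<Longrightarrow> (even (dst v w) \<longrightarrow> coll v) \<and> (odd (dst v w) \<longrightarrow> v \<notin> h ` points I)"
proof (induction "dst v w" arbitrary: v rule: less_induct)
  case less
  let ?D = "{k\<in>I. v k \<noteq> w k}"
  have finD: "finite ?D" using fin by auto
  have wp: "w \<in> points I" using coll_points assms by auto
  show ?case
  proof (cases "dst v w = 0")
    case True
    then have "?D = {}" using finD by (simp add: dst_def)
    have "v = w"
    proof (rule ext)
      fix k show "v k = w k"
      proof (cases "k \<in> I")
        case True thus ?thesis using \<open>?D = {}\<close> by blast
      next
        case False thus ?thesis using less.prems wp unfolding points_def by blast
      qed
    qed
    thus ?thesis using assms True by simp
  next
    case False
    have "?D \<noteq> {}" using False unfolding dst_def by (metis card.empty)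
    then obtain i where i: "i \<in> ?D" by blast
    let ?v1 = "v(i := \<not> v i)"
    have D1: "{k\<in>I. ?v1 k \<noteq> w k} = ?D - {i}" using i by auto
    have d1: "dst ?v1 w = dst v w - 1" unfolding dst_def D1 by (metis card_Diff_singleton i)
    have v1p: "?v1 \<in> points I" using less.prems i by (auto simp: points_def)
    have vv: "v = ?v1(i := \<not> ?v1 i)" by auto
    show ?thesis
    proof (intro conjI impI)
      assume od: "odd (dst v w)"
      have "even (dst ?v1 w)" using d1 od False by simp
      then have "coll ?v1" using less.hyps[of ?v1] d1 False v1p by auto
      from stepA[OF this, of i] i vv show "v \<notin> h ` points I" by auto
    next
      assume ev: "even (dst v w)"
      then have "dst v w \<noteq> 1" by (metis odd_one)
      then have "dst v w \<ge> 2" using False by linarith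
      then have "card (?D - {i}) \<ge> 1" using finD i by (simp add: dst_def)
      then have "?D - {i} \<noteq> {}" by (metis card.empty not_one_le_zero)
      then obtain j where j: "j \<in> ?D" "j \<noteq> i" by blast
      let ?v2 = "v(i := \<not> v i, j := \<not> v j)"
      have D2: "{k\<in>I. ?v2 k \<noteq> w k} = ?D - {i,j}" using i j by auto
      have "card (?D - {i,j}) = card ?D - 2"
        using finD i j by (simp add: card_Diff_subset)
      then have d2: "dst ?v2 w = dst v w - 2" using D2 by (simp add: dst_def)
      have v2p: "?v2 \<in> points I" using less.prems i j by (auto simp: points_def)
      have "even (dst ?v2 w)" using d2 ev \<open>dst v w \<ge> 2\<close> by simp
      then have "coll ?v2" using less.hyps[of ?v2] d2 False v2p by auto
      have e: "?v2(i := \<not> ?v2 i, j := \<not> ?v2 j) = v" using j(2) by (auto simp: fun_eq_iff)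
      have ij: "i \<in> I" "j \<in> I" using i j by auto
      have "coll (?v2(i := \<not> ?v2 i, j := \<not> ?v2 j))"
        using stepB[OF \<open>coll ?v2\<close> ij j(2)[symmetric]] .
      with e show "coll v" by metis
    qed
  qed
qed

lemma main:
  assumes "\<not> inj_on h (points I)"
  shows "(\<forall>x\<in>points I. h (xorp x (ones I)) = h x) \<and>
     (h ` points I = {x\<in>points I. even (weight I x)} \<or> h ` points I = {x\<in>points I. odd (weight I x)})"
proof -
  obtain x y where xy: "x \<in> points I" "y \<in> points I" "h x = h y" "x \<noteq> y"
    using assms unfolding inj_on_def by auto
  have "y = xorp x (ones I)" using antipodal xy by blast
  hence cw: "coll (h x)" unfolding coll_def using xy by auto
  let ?w = "h x"
  have img: "v \<in> h ` points I \<longleftrightarrow> even (dst v ?w)" if "v \<in> points I" for v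
    using distD[OF cw that] coll_def by auto
  have sub: "h ` points I \<subseteq> points I" using maps by auto
  have par: "even (dst v ?w) \<longleftrightarrow> (even (weight I v) \<longleftrightarrow> even (weight I ?w))" for v
  proof -
    have "card {k\<in>I. v k \<noteq> ?w k} + 2 * card {k\<in>I. v k \<and> ?w k}
       = card {k\<in>I. v k} + card {k\<in>I. ?w k}" using parity[OF fin] .
    thus ?thesis unfolding dst_def weight_def by (rule par_aux)
  qed
  have part1: "\<forall>x'\<in>points I. h (xorp x' (ones I)) = h x'"
  proof
    fix x' assume x': "x' \<in> points I"
    have "h x' \<in> points I" using maps x' by auto
    moreover have "h x' \<in> h ` points I" using x' by auto
    ultimately have "coll (h x')" using img distD[OF cw] by blast
    then obtain u where u: "u \<in> points I" "h u = h x'" "h (xorp u (ones I)) = h x'"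
      unfolding coll_def by auto
    show "h (xorp x' (ones I)) = h x'"
    proof (cases "x' = u")
      case True thus ?thesis using u by simp
    next
      case False
      have "x' = xorp u (ones I)" using antipodal[OF u(1) x'] u(2) False by auto
      hence "xorp x' (ones I) = u" using xor1_twice[OF u(1)] by simp
      thus ?thesis using u by simp
    qed
  qed
  have part2: "h ` points I = {x\<in>points I. even (weight I x)} \<or> h ` points I = {x\<in>points I. odd (weight I x)}"
  proof (cases "even (weight I ?w)")
    case True
    have "h ` points I = {x\<in>points I. even (weight I x)}"
    proof (rule set_eqI)
      fix v show "v \<in> h ` points I \<longleftrightarrow> v \<in> {x\<in>points I. even (weight I x)}"
      proof (cases "v \<in> points I")
        case True thus ?thesis using img[OF True] par[of v] \<open>even (weight I ?w)\<close> by simp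
      next
        case False thus ?thesis using sub by auto
      qed
    qed
    thus ?thesis by simp
  next
    case False
    have "h ` points I = {x\<in>points I. odd (weight I x)}"
    proof (rule set_eqI)
      fix v show "v \<in> h ` points I \<longleftrightarrow> v \<in> {x\<in>points I. odd (weight I x)}"
      proof (cases "v \<in> points I")
        case True thus ?thesis using img[OF True] par[of v] \<open>\<not> even (weight I ?w)\<close> by simp
      next
        case False thus ?thesis using sub by auto
      qed
    qed
    thus ?thesis by simp
  qed
  show ?thesis using part1 part2 by blast
qed

end

lemma conj_points: "x \<in> points I \<Longrightarrow> conj_net (subnet f I z) x \<in> points I"
  by (auto simp: points_def conj_net_def subnet_def restr_def xorp_def)

lemma inj_all:
  assumes fV: "finite V"
    and H: "\<And>I z. I \<noteq> {} \<Longrightarrow> I \<subseteq> V \<Longrightarrow> z \<in> points (V - I) \<Longrightarrow>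
           \<not> even_self_dual I (subnet f I z) \<and> \<not> odd_self_dual I (subnet f I z)"
  shows "I \<noteq> {} \<Longrightarrow> I \<subseteq> V \<Longrightarrow> z \<in> points (V - I) \<Longrightarrow> inj_on (conj_net (subnet f I z)) (points I)"
proof (induction "card I" arbitrary: I z rule: less_induct)
  case less
  let ?g = "subnet f I z"
  let ?h = "conj_net ?g"
  have finI: "finite I" using less.prems(2) fV finite_subset by blast
  have P: "x = y" if a: "i \<in> I" "x \<in> points I" "y \<in> points I" "x i = y i"
      "\<forall>v\<in>I-{i}. ?h x v = ?h y v" for i x y
  proof (cases "I - {i} = {}")
    case True
    show ?thesis
    proof (rule ext)
      fix v show "x v = y v"
        using True a(2-4) unfolding points_def by (cases "v \<in> I") auto
    qed
  next
    case False
    let ?I' = "I - {i}"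
    let ?z' = "z(i := x i)"
    have lt: "card ?I' < card I" using finI a(1) by (rule card_Diff1_less)
    have z'p: "?z' \<in> points (V - ?I')" using less.prems(2,3) a(1) by (auto simp: points_def)
    have inj': "inj_on (conj_net (subnet f ?I' ?z')) (points ?I')"
      using less.hyps[OF lt False _ z'p] less.prems(2) by auto
    have key: "conj_net (subnet f ?I' ?z') (restr ?I' u) = restr ?I' (?h u)"
      if "u \<in> points I" "u i = x i" for u
    proof -
      have G: "glue ?I' (restr ?I' u) ?z' = glue I u z"
        using that a(1) by (auto simp: glue_def restr_def fun_eq_iff)
      show ?thesis unfolding conj_net_def subnet_def G by (auto simp: restr_def xorp_def fun_eq_iff)
    qed
    have "restr ?I' (?h x) = restr ?I' (?h y)" using a(5) by (auto simp: restr_def fun_eq_iff)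
    then have "conj_net (subnet f ?I' ?z') (restr ?I' x) = conj_net (subnet f ?I' ?z') (restr ?I' y)"
      using key[of x] key[of y] a by simp
    moreover have "restr ?I' x \<in> points ?I'" "restr ?I' y \<in> points ?I'"
      by (auto simp: restr_def points_def)
    ultimately have rr: "restr ?I' x = restr ?I' y" using inj' by (meson inj_onD)
    show "x = y"
    proof (rule ext)
      fix v show "x v = y v"
      proof (cases "v \<in> ?I'")
        case True thus ?thesis using fun_cong[OF rr, of v] by (simp add: restr_def)
      next
        case False thus ?thesis using a(2-4) unfolding points_def by (cases "v = i") auto
      qed
    qed
  qed
  show ?case
  proof (rule ccontr)
    assume ni: "\<not> inj_on ?h (points I)"
    interpret slice I ?h
      using finI conj_points P by unfold_locales blast+
    from main[OF ni] have sd: "\<forall>x\<in>points I. ?h (xorp x (ones I)) = ?h x"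
      and eo: "?h ` points I = {x\<in>points I. even (weight I x)} \<or> ?h ` points I = {x\<in>points I. odd (weight I x)}"
      by auto
    have "self_dual I ?g"
      unfolding self_dual_def
    proof
      fix x assume x: "x \<in> points I"
      have e: "?h (xorp x (ones I)) = ?h x" using sd x by blast
      show "?g (xorp x (ones I)) = xorp (?g x) (ones I)"
      proof (rule ext)
        fix v
        show "?g (xorp x (ones I)) v = xorp (?g x) (ones I) v"
          using fun_cong[OF e, of v] by (auto simp: conj_net_def xorp_def ones_def)
      qed
    qed
    then show False using H[OF less.prems] eo
      unfolding even_self_dual_def odd_self_dual_def even_net_def odd_net_def by blast
  qed
qed

theorem theorem8:
  fixes V :: "'v set" and f :: "('v \<Rightarrow> bool) \<Rightarrow> ('v \<Rightarrow> bool)"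
  assumes "finite V" and "V \<noteq> {}"
    and "\<And>x. x \<in> points V \<Longrightarrow> f x \<in> points V"
    and "\<And>I z. I \<noteq> {} \<Longrightarrow> I \<subseteq> V \<Longrightarrow> z \<in> points (V - I) \<Longrightarrow>
           \<not> even_self_dual I (subnet f I z) \<and> \<not> odd_self_dual I (subnet f I z)"
  shows "bij_betw (conj_net f) (points V) (points V)"
proof -
  let ?z = "\<lambda>_::'v. False"
  have zp: "?z \<in> points (V - V)" by (simp add: points_def)
  have inj0: "inj_on (conj_net (subnet f V ?z)) (points V)"
    using inj_all[OF assms(1) assms(4) assms(2) _ zp] by simp
  have eq: "conj_net (subnet f V ?z) x = conj_net f x" if "x \<in> points V" for x
  proof -
    have "glue V x ?z = x" using that by (auto simp: glue_def points_def fun_eq_iff)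
    moreover have "restr V (f x) = f x" using assms(3)[OF that] by (auto simp: restr_def points_def fun_eq_iff)
    ultimately show ?thesis by (simp add: conj_net_def subnet_def)
  qed
  have inj: "inj_on (conj_net f) (points V)" using inj0 eq inj_on_cong by blast
  have sub: "conj_net f ` points V \<subseteq> points V"
    using assms(3) by (auto simp: points_def conj_net_def xorp_def)
  have "conj_net f ` points V = points V"
    by (rule endo_inj_surj[OF points_finite[OF assms(1)] sub inj])
  thus ?thesis using inj by (simp add: bij_betw_def)
qed

end
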